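(* Let $Q(z)$ be a $k\times k$ Hermite matrix of Laurent polynomials with $Q_{1,1}(z)\not\equiv0$ and $$\operatorname{len}(Q_{1,1})\le\operatorname{len}(Q_{2,2})\le\dots\le\operatorname{len}(Q_{k,k}).$$ Suppose $0\le s<k$ and $Q$ is diagonally dominant at each of its diagonal entries $1,\dots,s$ (no condition if $s=0$). Then there exists a $k\times k$ unimodular matrix $U(z)$ of Laurent polynomials such that $\widetilde Q(z):=U(z)Q(z)U^\star(z)$ is diagonally dominant at each of its diagonal entries $1,\dots,s+1$, and the top-left $(s+1)\times(s+1)$ submatrix of $\widetilde Q$ equals that of $Q$.
   Context: For a matrix $U(z)=\sum_k U_k z^k$ of Laurent polynomials, $U^\star(z):=\sum_k\overline{U_k}^T z^{-k}$; Hermite means $A^\star=A$. A square matrix of Laurent polynomials is unimodular if its determinant is a nonzero monomial $cz^m$ ($c\neq0$). For a Laurent polynomial $u\not\equiv0$: $\deg(u)$ is its highest degree, $\operatorname{ldeg}(u)$ its lowest degree, $\operatorname{len}(u):=\deg(u)-\operatorname{ldeg}(u)$, and $\operatorname{fs}(u):=[\operatorname{ldeg}(u),\deg(u)]$ (an integer interval); for $u\equiv0$, $\operatorname{len}(u):=-\infty$, $\deg(u):=-\infty$ and $\operatorname{fs}(u):=\emptyset$. A $k\times k$ matrix $Q(z)$ of Laurent polynomials is diagonally dominant at the diagonal entry $s$ if (1) for all $i\ne s$: $\operatorname{fs}(Q_{i,s})\subsetneq\operatorname{fs}(Q_{s,s})$ and $\operatorname{fs}(Q_{s,i})\subsetneq\operatorname{fs}(Q_{s,s})$;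 and (2) for all $i>s$: $\deg(Q_{s,i})<\deg(Q_{s,s})$. $Q$ is diagonally dominant if it is diagonally dominant at every diagonal entry. *)

theory Defs
  imports "HOL-Library.Poly_Mapping" "HOL-Library.Extended_Real" "Jordan_Normal_Form.Determinant"
begin

text \<open>Laurent polynomials over the complex numbers in z: finitely supported
  maps from exponents (int) to coefficients; multiplication is convolution.\<close>
type_synonym lpoly = "int \<Rightarrow>\<^sub>0 complex"

definition lstar :: "lpoly \<Rightarrow> lpoly" where
  "lstar p = Abs_poly_mapping (\<lambda>n. cnj (Poly_Mapping.lookup p (- n)))"

definition star_mat :: "lpoly mat \<Rightarrow> lpoly mat" where
  "star_mat U = mat (dim_col U) (dim_row U) (\<lambda>(i, j). lstar (U $$ (j, i)))"

definition hermite :: "lpoly mat \<Rightarrow> bool" where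
  "hermite A \<longleftrightarrow> star_mat A = A"

definition unimodular :: "nat \<Rightarrow> lpoly mat \<Rightarrow> bool" where
  "unimodular k U \<longleftrightarrow> U \<in> carrier_mat k k \<and>
     (\<exists>c m. c \<noteq> 0 \<and> det U = Poly_Mapping.single m c)"

definition ldegree :: "lpoly \<Rightarrow> ereal" where
  "ldegree p = (if p = 0 then -\<infinity> else ereal (of_int (Max (Poly_Mapping.keys p))))"

definition llen :: "lpoly \<Rightarrow> ereal" where
  "llen p = (if p = 0 then -\<infinity> else ereal (of_int (Max (Poly_Mapping.keys p) - Min (Poly_Mapping.keys p))))"

definition fs :: "lpoly \<Rightarrow> int set" where
  "fs p = (if p = 0 then {} else {Min (Poly_Mapping.keys p) .. Max (Poly_Mapping.keys p)})"

text \<open>diagonal dominance at diagonal entry s (0-based index) of a k x k matrix\<close>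
definition diag_dom_at :: "nat \<Rightarrow> lpoly mat \<Rightarrow> nat \<Rightarrow> bool" where
  "diag_dom_at k Q s \<longleftrightarrow>
     (\<forall>i<k. i \<noteq> s \<longrightarrow> fs (Q $$ (i, s)) \<subset> fs (Q $$ (s, s)) \<and>
                     fs (Q $$ (s, i)) \<subset> fs (Q $$ (s, s))) \<and>
     (\<forall>i<k. s < i \<longrightarrow> ldegree (Q $$ (s, i)) < ldegree (Q $$ (s, s)))"

end

theory Submission
  imports Defs
begin


lemma lookup_single_mult: "Poly_Mapping.lookup (Poly_Mapping.single m c * (p::lpoly)) e = c * Poly_Mapping.lookup p (e - m)"
proof -
  have "Poly_Mapping.lookup (Poly_Mapping.single m c * p) e
     = Sum_any (\<lambda>l. (c * Sum_any (\<lambda>q. Poly_Mapping.lookup p q when e = l + q)) when m = l)"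
    unfolding lookup_mult lookup_single by (simp add: when_mult)
  also have "\<dots> = c * Sum_any (\<lambda>q. Poly_Mapping.lookup p q when e = m + q)" by simp
  also have "Sum_any (\<lambda>q. Poly_Mapping.lookup p q when e = m + q) = Sum_any (\<lambda>q. Poly_Mapping.lookup p q when q = e - m)"
    by (rule Sum_any.cong) (auto simp: when_def)
  finally show ?thesis by simp
qed

lemma lookup_mult_single: "Poly_Mapping.lookup ((p::lpoly) * Poly_Mapping.single m c) e = c * Poly_Mapping.lookup p (e - m)"
  by (metis lookup_single_mult mult.commute)

lemma lookup_lstar: "Poly_Mapping.lookup (lstar p) n = cnj (Poly_Mapping.lookup p (- n))"
proof -
  have "{n. cnj (Poly_Mapping.lookup p (- n)) \<noteq> 0} = uminus ` Poly_Mapping.keys p"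
    apply (auto simp: in_keys_iff image_iff)
    by (metis in_keys_iff minus_minus)
  then have "finite {n. cnj (Poly_Mapping.lookup p (- n)) \<noteq> 0}" by simp
  then show ?thesis unfolding lstar_def by simp
qed

lemma lstar_add: "lstar (p + q) = lstar p + lstar q"
  by (rule poly_mapping_eqI) (simp add: lookup_lstar lookup_add)
lemma lstar_minus: "lstar (p - q) = lstar p - lstar q"
  by (rule poly_mapping_eqI) (simp add: lookup_lstar lookup_minus)
lemma lstar_zero[simp]: "lstar 0 = 0"
  by (rule poly_mapping_eqI) (simp add: lookup_lstar)
lemma lstar_one[simp]: "lstar 1 = 1"
  by (rule poly_mapping_eqI) (simp add: lookup_lstar lookup_one when_def)
lemma lstar_lstar[simp]: "lstar (lstar p) = p"
  by (rule poly_mapping_eqI) (simp add: lookup_lstar)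
lemma lstar_sum: "lstar (sum f A) = sum (\<lambda>x. lstar (f x)) A"
  by (induction A rule: infinite_finite_induct) (auto simp: lstar_add)
lemma lstar_single: "lstar (Poly_Mapping.single a b) = Poly_Mapping.single (-a) (cnj b)"
  by (rule poly_mapping_eqI) (auto simp add: lookup_lstar lookup_single when_def)

lemma lstar_single_mult: "lstar (Poly_Mapping.single a b * q) = lstar (Poly_Mapping.single a b) * lstar q"
  by (rule poly_mapping_eqI) (simp add: lookup_lstar lstar_single lookup_single_mult lookup_mult_single algebra_simps)

lemma update_eq_add: "a \<notin> Poly_Mapping.keys f \<Longrightarrow> Poly_Mapping.update a b f = f + Poly_Mapping.single a b"
  by (rule poly_mapping_eqI) (auto simp: lookup_update lookup_add lookup_single when_def in_keys_iff)

lemma lstar_mult: "lstar ((p::lpoly) * q) = lstar p * lstar q"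
proof (induction p rule: update_induct)
  case const then show ?case by simp
next
  case (update f a b)
  then show ?case by (simp add: update_eq_add distrib_right lstar_add lstar_single_mult)
qed



locale red =
  fixes n :: nat and R :: "nat \<Rightarrow> nat \<Rightarrow> lpoly" and d :: "nat \<Rightarrow> int"
  assumes diag_top: "t<n \<Longrightarrow> Poly_Mapping.lookup (R t t) (d t) \<noteq> 0"
    and diag_bot: "t<n \<Longrightarrow> Poly_Mapping.lookup (R t t) (- d t) \<noteq> 0"
    and diag_supp: "t<n \<Longrightarrow> Poly_Mapping.lookup (R t t) e \<noteq> 0 \<Longrightarrow> - d t \<le> e \<and> e \<le> d t"
    and lower: "j<t \<Longrightarrow> t<n \<Longrightarrow> Poly_Mapping.lookup (R t j) e \<noteq> 0 \<Longrightarrow> - d j + 1 \<le> e \<and> e \<le> d j"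
    and upper: "t<j \<Longrightarrow> j<n \<Longrightarrow> Poly_Mapping.lookup (R t j) e \<noteq> 0 \<Longrightarrow> - d t \<le> e \<and> e \<le> d t - 1"
    and dmono: "t \<le> j \<Longrightarrow> j<n \<Longrightarrow> d t \<le> d j"
begin

definition comb :: "(nat \<Rightarrow> lpoly) \<Rightarrow> (nat \<Rightarrow> lpoly) \<Rightarrow> nat \<Rightarrow> lpoly" where
  "comb r x j = r j + (\<Sum>t<n. x t * R t j)"

lemma comb_zero: "comb r (\<lambda>_. 0) j = r j" by (simp add: comb_def)

lemma comb_step:
  assumes "j0 < n"
  shows "comb r (\<lambda>t. x t - (if t = j0 then a else 0)) j = comb (\<lambda>j. r j - a * R j0 j) x j"
proof -
  have "(\<Sum>t<n. (x t - (if t = j0 then a else 0)) * R t j) = (\<Sum>t<n. x t * R t j) - (\<Sum>t<n. (if t = j0 then a * R t j else 0))"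
    by (simp add: left_diff_distrib sum_subtractf if_distrib[of "\<lambda>u. u * _"] cong: if_cong)
  also have "(\<Sum>t<n. (if t = j0 then a * R t j else 0)) = a * R j0 j" using assms by simp
  finally show ?thesis by (simp add: comb_def)
qed

lemma top_red:
  "\<forall>r. (\<forall>j<n. \<forall>e. Poly_Mapping.lookup (r j) e \<noteq> 0 \<longrightarrow> d j < e \<longrightarrow> nat (e - d j - 1) * n + j < N)
     \<longrightarrow> (\<exists>x. \<forall>j<n. \<forall>e. Poly_Mapping.lookup (comb r x j) e \<noteq> 0 \<longrightarrow> e \<le> d j)"
proof (induction N)
  case 0
  show ?case
  proof (intro allI impI)
    fix r :: "nat \<Rightarrow> lpoly"
    assume H: "\<forall>j<n. \<forall>e. Poly_Mapping.lookup (r j) e \<noteq> 0 \<longrightarrow> d j < e \<longrightarrow> nat (e - d j - 1) * n + j < 0"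
    show "\<exists>x. \<forall>j<n. \<forall>e. Poly_Mapping.lookup (comb r x j) e \<noteq> 0 \<longrightarrow> e \<le> d j"
      by (rule exI[of _ "\<lambda>_. 0"]) (use H in \<open>auto simp: comb_zero not_less[symmetric]\<close>)
  qed
next
  case (Suc N)
  show ?case
  proof (intro allI impI)
    fix r :: "nat \<Rightarrow> lpoly"
    assume H: "\<forall>j<n. \<forall>e. Poly_Mapping.lookup (r j) e \<noteq> 0 \<longrightarrow> d j < e \<longrightarrow> nat (e - d j - 1) * n + j < Suc N"
    show "\<exists>x. \<forall>j<n. \<forall>e. Poly_Mapping.lookup (comb r x j) e \<noteq> 0 \<longrightarrow> e \<le> d j"
    proof (cases "n = 0")
      case True then show ?thesis by auto
    next
      case False
      then have npos: "0 < n" by simp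
      define j0 where "j0 = N mod n"
      define v where "v = N div n"
      define e0 where "e0 = d j0 + 1 + int v"
      have j0n: "j0 < n" using npos by (simp add: j0_def)
      have Neq: "N = v * n + j0" by (simp add: j0_def v_def)
      have uniq: "j = j0 \<and> e = e0" if "j < n" "d j < e" "nat (e - d j - 1) * n + j = N" for j e
      proof -
        have "N mod n = j" using that by (metis mod_mult_self3 mod_less)
        moreover have "N div n = nat (e - d j - 1)" using that
          by (metis add.commute div_less div_mult_self1 npos add_0 less_not_refl2 less_numeral_extra(3)
               not_gr_zero)
        ultimately show ?thesis using that by (auto simp: j0_def v_def e0_def)
      qed
      show ?thesis
      proof (cases "Poly_Mapping.lookup (r j0) e0 = 0")
        case True
        have "\<forall>j<n. \<forall>e. Poly_Mapping.lookup (r j) e \<noteq> 0 \<longrightarrow> d j < e \<longrightarrow> nat (e - d j - 1) * n + j < N"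
        proof (intro allI impI)
          fix j e assume a: "j < n" "Poly_Mapping.lookup (r j) e \<noteq> 0" "d j < e"
          then have "nat (e - d j - 1) * n + j < Suc N" using H by blast
          moreover have "nat (e - d j - 1) * n + j \<noteq> N" using uniq[of j e] a True by auto
          ultimately show "nat (e - d j - 1) * n + j < N" by simp
        qed
        then show ?thesis using Suc.IH by blast
      next
        case False
        define c where "c = Poly_Mapping.lookup (r j0) e0 / Poly_Mapping.lookup (R j0 j0) (d j0)"
        define m where "m = e0 - d j0"
        have mv: "m = int v + 1" by (simp add: m_def e0_def)
        define r' where "r' = (\<lambda>j. r j - Poly_Mapping.single m c * R j0 j)"
        have lr': "Poly_Mapping.lookup (r' j) e = Poly_Mapping.lookup (r j) e - c * Poly_Mapping.lookup (R j0 j) (e - m)" for j e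
          by (simp add: r'_def lookup_minus lookup_single_mult)
        have "\<forall>j<n. \<forall>e. Poly_Mapping.lookup (r' j) e \<noteq> 0 \<longrightarrow> d j < e \<longrightarrow> nat (e - d j - 1) * n + j < N"
        proof (intro allI impI)
          fix j e assume a: "j < n" "Poly_Mapping.lookup (r' j) e \<noteq> 0" "d j < e"
          define a0 where "a0 = nat (e - d j - 1)"
          have ia: "int a0 = e - d j - 1" using a by (simp add: a0_def)
          show "nat (e - d j - 1) * n + j < N"
          proof (cases "j = j0 \<and> e = e0")
            case True
            then have "Poly_Mapping.lookup (r' j) e = 0"
              using diag_top[OF j0n] by (simp add: lr' c_def m_def)
            then show ?thesis using a by simp
          next
            case ne: False
            show ?thesis
            proof (cases "Poly_Mapping.lookup (r j) e \<noteq> 0")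
              case True
              then have "nat (e - d j - 1) * n + j < Suc N" using H a by blast
              moreover have "nat (e - d j - 1) * n + j \<noteq> N" using uniq[of j e] a ne by auto
              ultimately show ?thesis by simp
            next
              case False
              then have nz: "Poly_Mapping.lookup (R j0 j) (e - m) \<noteq> 0" using a(2) lr' by auto
              consider "j = j0" | "j < j0" | "j0 < j" by linarith
              then show ?thesis
              proof cases
                case 1
                then have "e - m \<le> d j0" using diag_supp[OF j0n, of "e - m"] nz by simp
                then have "e < e0" using ne 1 by (simp add: m_def)
                then have "a0 < v" using ia 1 by (simp add: e0_def)
                then have "a0 * n < v * n" using npos by simp
                then show ?thesis using 1 Neq by (simp add: a0_def)
              next
                case 2
                then have "e - m \<le> d j" using lower[OF 2 j0n nz] by simp
                then have "a0 \<le> v" using ia mv by simp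
                then have "a0 * n \<le> v * n" by (rule mult_le_mono1)
                then show ?thesis using 2 Neq unfolding a0_def by linarith
              next
                case 3
                then have "e - m \<le> d j0 - 1" using upper[OF 3 a(1) nz] by simp
                moreover have "d j0 \<le> d j" using dmono 3 a(1) by simp
                ultimately have "a0 + 1 \<le> v" using ia mv by simp
                then have "(a0 + 1) * n \<le> v * n" by (rule mult_le_mono1)
                then show ?thesis using a(1) Neq by (simp add: a0_def)
              qed
            qed
          qed
        qed
        then obtain x' where x': "\<forall>j<n. \<forall>e. Poly_Mapping.lookup (comb r' x' j) e \<noteq> 0 \<longrightarrow> e \<le> d j"
          using Suc.IH by blast
        show ?thesis
          by (rule exI[of _ "\<lambda>t. x' t - (if t = j0 then Poly_Mapping.single m c else 0)"])
             (use x' in \<open>simp add: comb_step[OF j0n] r'_def\<close>)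
      qed
    qed
  qed
qed

lemma bot_red:
  "\<forall>r. (\<forall>j<n. \<forall>e. Poly_Mapping.lookup (r j) e \<noteq> 0 \<longrightarrow> e \<le> d j) \<longrightarrow>
     (\<forall>j<n. \<forall>e. Poly_Mapping.lookup (r j) e \<noteq> 0 \<longrightarrow> e \<le> - d j \<longrightarrow> nat (- e - d j) * n + (n - 1 - j) < N)
     \<longrightarrow> (\<exists>x. \<forall>j<n. \<forall>e. Poly_Mapping.lookup (comb r x j) e \<noteq> 0 \<longrightarrow> - d j + 1 \<le> e \<and> e \<le> d j)"
proof (induction N)
  case 0
  show ?case
  proof (intro allI impI)
    fix r :: "nat \<Rightarrow> lpoly"
    assume T: "\<forall>j<n. \<forall>e. Poly_Mapping.lookup (r j) e \<noteq> 0 \<longrightarrow> e \<le> d j"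
    assume H: "\<forall>j<n. \<forall>e. Poly_Mapping.lookup (r j) e \<noteq> 0 \<longrightarrow> e \<le> - d j \<longrightarrow> nat (- e - d j) * n + (n - 1 - j) < 0"
    show "\<exists>x. \<forall>j<n. \<forall>e. Poly_Mapping.lookup (comb r x j) e \<noteq> 0 \<longrightarrow> - d j + 1 \<le> e \<and> e \<le> d j"
    proof (rule exI[of _ "\<lambda>_. 0"], intro allI impI)
      fix j e assume "j < n" "Poly_Mapping.lookup (comb r (\<lambda>_. 0) j) e \<noteq> 0"
      then show "- d j + 1 \<le> e \<and> e \<le> d j" using T H by (fastforce simp: comb_zero)
    qed
  qed
next
  case (Suc N)
  show ?case
  proof (intro allI impI)
    fix r :: "nat \<Rightarrow> lpoly"
    assume T: "\<forall>j<n. \<forall>e. Poly_Mapping.lookup (r j) e \<noteq> 0 \<longrightarrow> e \<le> d j"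
    assume H: "\<forall>j<n. \<forall>e. Poly_Mapping.lookup (r j) e \<noteq> 0 \<longrightarrow> e \<le> - d j \<longrightarrow> nat (- e - d j) * n + (n - 1 - j) < Suc N"
    show "\<exists>x. \<forall>j<n. \<forall>e. Poly_Mapping.lookup (comb r x j) e \<noteq> 0 \<longrightarrow> - d j + 1 \<le> e \<and> e \<le> d j"
    proof (cases "n = 0")
      case True then show ?thesis by auto
    next
      case False
      then have npos: "0 < n" by simp
      define j0 where "j0 = n - 1 - N mod n"
      define w where "w = N div n"
      define e0 where "e0 = - d j0 - int w"
      have j0n: "j0 < n" using npos by (simp add: j0_def)
      have Nmod: "N mod n < n" using npos by simp
      have Neq: "N = w * n + (n - 1 - j0)" using Nmod by (simp add: j0_def w_def)
      have uniq: "j = j0 \<and> e = e0" if "j < n" "e \<le> - d j" "nat (- e - d j) * n + (n - 1 - j) = N" for j e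
      proof -
        have b: "n - 1 - j < n" using npos by simp
        have "N mod n = n - 1 - j" using that(3)[symmetric] b by simp
        moreover have "N div n = nat (- e - d j)" using that(3)[symmetric] b npos by simp
        ultimately show ?thesis using that by (auto simp: j0_def w_def e0_def)
      qed
      show ?thesis
      proof (cases "Poly_Mapping.lookup (r j0) e0 = 0")
        case True
        have "\<forall>j<n. \<forall>e. Poly_Mapping.lookup (r j) e \<noteq> 0 \<longrightarrow> e \<le> - d j \<longrightarrow> nat (- e - d j) * n + (n - 1 - j) < N"
        proof (intro allI impI)
          fix j e assume a: "j < n" "Poly_Mapping.lookup (r j) e \<noteq> 0" "e \<le> - d j"
          then have "nat (- e - d j) * n + (n - 1 - j) < Suc N" using H by blast
          moreover have "nat (- e - d j) * n + (n - 1 - j) \<noteq> N" using uniq[of j e] a True by auto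
          ultimately show "nat (- e - d j) * n + (n - 1 - j) < N" by simp
        qed
        then show ?thesis using Suc.IH T by blast
      next
        case False
        define c where "c = Poly_Mapping.lookup (r j0) e0 / Poly_Mapping.lookup (R j0 j0) (- d j0)"
        define m where "m = e0 + d j0"
        have mw: "m = - int w" by (simp add: m_def e0_def)
        define r' where "r' = (\<lambda>j. r j - Poly_Mapping.single m c * R j0 j)"
        have lr': "Poly_Mapping.lookup (r' j) e = Poly_Mapping.lookup (r j) e - c * Poly_Mapping.lookup (R j0 j) (e - m)" for j e
          by (simp add: r'_def lookup_minus lookup_single_mult)
        have T': "\<forall>j<n. \<forall>e. Poly_Mapping.lookup (r' j) e \<noteq> 0 \<longrightarrow> e \<le> d j"
        proof (intro allI impI)
          fix j e assume a: "j < n" "Poly_Mapping.lookup (r' j) e \<noteq> 0"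
          show "e \<le> d j"
          proof (cases "Poly_Mapping.lookup (r j) e \<noteq> 0")
            case True then show ?thesis using T a by blast
          next
            case False
            then have nz: "Poly_Mapping.lookup (R j0 j) (e - m) \<noteq> 0" using a(2) lr' by auto
            have "e - m \<le> d j"
            proof -
              consider "j = j0" | "j < j0" | "j0 < j" by linarith
              then show ?thesis
              proof cases
                case 1 then show ?thesis using diag_supp[OF j0n, of "e - m"] nz by simp
              next
                case 2 then show ?thesis using lower[OF 2 j0n nz] by simp
              next
                case 3 then show ?thesis using upper[OF 3 a(1) nz] dmono[of j0 j] a(1) by simp
              qed
            qed
            then show ?thesis using mw by simp
          qed
        qed
        have "\<forall>j<n. \<forall>e. Poly_Mapping.lookup (r' j) e \<noteq> 0 \<longrightarrow> e \<le> - d j \<longrightarrow> nat (- e - d j) * n + (n - 1 - j) < N"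
        proof (intro allI impI)
          fix j e assume a: "j < n" "Poly_Mapping.lookup (r' j) e \<noteq> 0" "e \<le> - d j"
          define a0 where "a0 = nat (- e - d j)"
          have ia: "int a0 = - e - d j" using a by (simp add: a0_def)
          show "nat (- e - d j) * n + (n - 1 - j) < N"
          proof (cases "j = j0 \<and> e = e0")
            case True
            then have "Poly_Mapping.lookup (r' j) e = 0"
              using diag_bot[OF j0n] by (simp add: lr' c_def m_def)
            then show ?thesis using a by simp
          next
            case ne: False
            show ?thesis
            proof (cases "Poly_Mapping.lookup (r j) e \<noteq> 0")
              case True
              then have "nat (- e - d j) * n + (n - 1 - j) < Suc N" using H a by blast
              moreover have "nat (- e - d j) * n + (n - 1 - j) \<noteq> N" using uniq[of j e] a ne by auto
              ultimately show ?thesis by simp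
            next
              case False
              then have nz: "Poly_Mapping.lookup (R j0 j) (e - m) \<noteq> 0" using a(2) lr' by auto
              consider "j = j0" | "j < j0" | "j0 < j" by linarith
              then show ?thesis
              proof cases
                case 1
                then have "- d j0 \<le> e - m" using diag_supp[OF j0n, of "e - m"] nz by simp
                then have "e0 < e" using ne 1 by (simp add: m_def)
                then have "a0 < w" using ia 1 by (simp add: e0_def)
                then have "a0 * n < w * n" using npos by simp
                then show ?thesis using 1 Neq unfolding a0_def by linarith
              next
                case 2
                then have "- d j + 1 \<le> e - m" using lower[OF 2 j0n nz] by simp
                then have "a0 + 1 \<le> w" using ia mw by simp
                then have "(a0 + 1) * n \<le> w * n" by (rule mult_le_mono1)
                then show ?thesis using a(1) Neq unfolding a0_def by simp
              next
                case 3
                then have "- d j0 \<le> e - m" using upper[OF 3 a(1) nz] by simp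
                moreover have "d j0 \<le> d j" using dmono 3 a(1) by simp
                ultimately have "a0 \<le> w" using ia mw by simp
                then have "a0 * n \<le> w * n" by (rule mult_le_mono1)
                then show ?thesis using 3 a(1) Neq unfolding a0_def by linarith
              qed
            qed
          qed
        qed
        then obtain x' where x': "\<forall>j<n. \<forall>e. Poly_Mapping.lookup (comb r' x' j) e \<noteq> 0 \<longrightarrow> - d j + 1 \<le> e \<and> e \<le> d j"
          using Suc.IH T' by blast
        show ?thesis
          by (rule exI[of _ "\<lambda>t. x' t - (if t = j0 then Poly_Mapping.single m c else 0)"])
             (use x' in \<open>simp add: comb_step[OF j0n] r'_def\<close>)
      qed
    qed
  qed
qed

lemma comb_comb: "comb (comb r x) y j = comb r (\<lambda>t. x t + y t) j"
  by (simp add: comb_def distrib_right sum.distrib)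

lemma full_red:
  "\<exists>x. \<forall>j<n. \<forall>e. Poly_Mapping.lookup (comb r x j) e \<noteq> 0 \<longrightarrow> - d j + 1 \<le> e \<and> e \<le> d j"
proof -
  define B where "B = Max (insert 0 (\<Union>j<n. (\<lambda>e. nat (e - d j - 1) * n + j) ` Poly_Mapping.keys (r j)))"
  have fin: "finite (insert 0 (\<Union>j<n. (\<lambda>e. nat (e - d j - 1) * n + j) ` Poly_Mapping.keys (r j)))" by simp
  have "\<forall>j<n. \<forall>e. Poly_Mapping.lookup (r j) e \<noteq> 0 \<longrightarrow> d j < e \<longrightarrow> nat (e - d j - 1) * n + j < Suc B"
  proof (intro allI impI)
    fix j e assume "j < n" "Poly_Mapping.lookup (r j) e \<noteq> 0"
    then have "nat (e - d j - 1) * n + j \<in> (\<Union>j<n. (\<lambda>e. nat (e - d j - 1) * n + j) ` Poly_Mapping.keys (r j))"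
      by (intro UN_I[of j] imageI) (auto simp: in_keys_iff)
    then have "nat (e - d j - 1) * n + j \<le> B" unfolding B_def
      by (intro Max_ge[OF fin]) auto
    then show "nat (e - d j - 1) * n + j < Suc B" by simp
  qed
  then obtain x where x: "\<forall>j<n. \<forall>e. Poly_Mapping.lookup (comb r x j) e \<noteq> 0 \<longrightarrow> e \<le> d j"
    using top_red by blast
  define r1 where "r1 = comb r x"
  define B2 where "B2 = Max (insert 0 (\<Union>j<n. (\<lambda>e. nat (- e - d j) * n + (n - 1 - j)) ` Poly_Mapping.keys (r1 j)))"
  have fin2: "finite (insert 0 (\<Union>j<n. (\<lambda>e. nat (- e - d j) * n + (n - 1 - j)) ` Poly_Mapping.keys (r1 j)))" by simp
  have "\<forall>j<n. \<forall>e. Poly_Mapping.lookup (r1 j) e \<noteq> 0 \<longrightarrow> e \<le> - d j \<longrightarrow> nat (- e - d j) * n + (n - 1 - j) < Suc B2"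
  proof (intro allI impI)
    fix j e assume "j < n" "Poly_Mapping.lookup (r1 j) e \<noteq> 0"
    then have "nat (- e - d j) * n + (n - 1 - j) \<in> (\<Union>j<n. (\<lambda>e. nat (- e - d j) * n + (n - 1 - j)) ` Poly_Mapping.keys (r1 j))"
      by (intro UN_I[of j] imageI) (auto simp: in_keys_iff)
    then have "nat (- e - d j) * n + (n - 1 - j) \<le> B2" unfolding B2_def
      by (intro Max_ge[OF fin2]) auto
    then show "nat (- e - d j) * n + (n - 1 - j) < Suc B2" by simp
  qed
  moreover have "\<forall>j<n. \<forall>e. Poly_Mapping.lookup (r1 j) e \<noteq> 0 \<longrightarrow> e \<le> d j" using x by (simp add: r1_def)
  ultimately obtain y where "\<forall>j<n. \<forall>e. Poly_Mapping.lookup (comb r1 y j) e \<noteq> 0 \<longrightarrow> - d j + 1 \<le> e \<and> e \<le> d j"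
    using bot_red by blast
  then show ?thesis unfolding r1_def comb_comb by blast
qed

end


lemma keys_nonempty: "(p::lpoly) \<noteq> 0 \<Longrightarrow> Poly_Mapping.keys p \<noteq> {}" by simp

lemma lookup_Max: "(p::lpoly) \<noteq> 0 \<Longrightarrow> Poly_Mapping.lookup p (Max (Poly_Mapping.keys p)) \<noteq> 0"
  using Max_in[OF finite_keys keys_nonempty] by (simp add: in_keys_iff)
lemma lookup_Min: "(p::lpoly) \<noteq> 0 \<Longrightarrow> Poly_Mapping.lookup p (Min (Poly_Mapping.keys p)) \<noteq> 0"
  using Min_in[OF finite_keys keys_nonempty] by (simp add: in_keys_iff)
lemma lookup_bounds: "Poly_Mapping.lookup (p::lpoly) e \<noteq> 0 \<Longrightarrow>
   Min (Poly_Mapping.keys p) \<le> e \<and> e \<le> Max (Poly_Mapping.keys p)"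
  by (simp add: in_keys_iff[symmetric])

lemma sym_Min: assumes "lstar p = p" "p \<noteq> 0"
  shows "Min (Poly_Mapping.keys p) = - Max (Poly_Mapping.keys p)"
proof -
  have s: "Poly_Mapping.lookup p e \<noteq> 0 \<longleftrightarrow> Poly_Mapping.lookup p (- e) \<noteq> 0" for e
    using arg_cong[OF assms(1), of "\<lambda>q. Poly_Mapping.lookup q e"] by (auto simp: lookup_lstar)
  show ?thesis
  proof (rule Min_eqI)
    show "finite (Poly_Mapping.keys p)" by simp
    show "- Max (Poly_Mapping.keys p) \<in> Poly_Mapping.keys p"
      using lookup_Max[OF assms(2)] s by (simp add: in_keys_iff)
    fix y assume "y \<in> Poly_Mapping.keys p"
    then have "- y \<in> Poly_Mapping.keys p" using s by (simp add: in_keys_iff)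
    then have "- y \<le> Max (Poly_Mapping.keys p)" by simp
    then show "- Max (Poly_Mapping.keys p) \<le> y" by simp
  qed
qed

lemma fs_supp: assumes "fs p \<subseteq> {a..b}" "Poly_Mapping.lookup p e \<noteq> 0" shows "a \<le> e \<and> e \<le> b"
proof -
  have "p \<noteq> 0" using assms(2) by auto
  then have "e \<in> fs p" using lookup_bounds[OF assms(2)] by (simp add: fs_def)
  then show ?thesis using assms(1) by auto
qed

lemma ldeg_supp: "ldegree p < ereal (of_int D) \<Longrightarrow> Poly_Mapping.lookup p e \<noteq> 0 \<Longrightarrow> e \<le> D - 1"
  using lookup_bounds[of p e] by (auto simp: ldegree_def in_keys_iff split: if_splits)

lemma ldeg_lt: "(\<forall>e. Poly_Mapping.lookup p e \<noteq> 0 \<longrightarrow> e \<le> D - 1) \<Longrightarrow> ldegree p < ereal (of_int D)"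
  using lookup_Max[of p] by (force simp: ldegree_def)

lemma fs_strict:
  assumes "\<forall>e. Poly_Mapping.lookup p e \<noteq> 0 \<longrightarrow> lo \<le> e \<and> e \<le> hi" "- D \<le> lo" "hi \<le> D" "- D < lo \<or> hi < D" "0 \<le> D"
  shows "fs p \<subset> {- D..D}"
proof (cases "p = 0")
  case True then show ?thesis using assms by (auto simp: fs_def)
next
  case False
  define mi where "mi = Min (Poly_Mapping.keys p)"
  define ma where "ma = Max (Poly_Mapping.keys p)"
  have "lo \<le> mi" using assms(1) lookup_Min[OF False] unfolding mi_def by blast
  moreover have "ma \<le> hi" using assms(1) lookup_Max[OF False] unfolding ma_def by blast
  moreover have fsp: "fs p = {mi..ma}" using False by (simp add: fs_def mi_def ma_def)
  ultimately have sub: "fs p \<subseteq> {- D..D}" using assms(2,3) by auto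
  have "- D \<notin> fs p \<or> D \<notin> fs p" using assms(4) fsp \<open>lo \<le> mi\<close> \<open>ma \<le> hi\<close> by auto
  moreover have "- D \<in> {- D..D}" "D \<in> {- D..D}" using assms(5) by auto
  ultimately show ?thesis using sub by blast
qed

lemma lstar_supp: "(\<forall>e. Poly_Mapping.lookup p e \<noteq> 0 \<longrightarrow> lo \<le> e \<and> e \<le> hi) \<Longrightarrow>
  Poly_Mapping.lookup (lstar p) e \<noteq> 0 \<Longrightarrow> - hi \<le> e \<and> e \<le> - lo"
  by (force simp: lookup_lstar)



definition winA :: "lpoly \<Rightarrow> int \<Rightarrow> bool" where
  "winA p D \<longleftrightarrow> (\<forall>e. Poly_Mapping.lookup p e \<noteq> 0 \<longrightarrow> - D + 1 \<le> e \<and> e \<le> D)"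
definition winB :: "lpoly \<Rightarrow> int \<Rightarrow> bool" where
  "winB p D \<longleftrightarrow> (\<forall>e. Poly_Mapping.lookup p e \<noteq> 0 \<longrightarrow> - D \<le> e \<and> e \<le> D - 1)"

lemma winA_fs: "winA p D \<Longrightarrow> 0 \<le> D \<Longrightarrow> fs p \<subset> {- D..D}"
  unfolding winA_def by (rule fs_strict[of p "- D + 1" D D]) auto
lemma winB_fs: "winB p D \<Longrightarrow> 0 \<le> D \<Longrightarrow> fs p \<subset> {- D..D}"
  unfolding winB_def by (rule fs_strict[of p "- D" "D - 1" D]) auto
lemma winA_lstar: "winA p D \<Longrightarrow> winB (lstar p) D"
  unfolding winA_def winB_def using lstar_supp[of p "- D + 1" D] by force
lemma winB_lstar: "winB p D \<Longrightarrow> winA (lstar p) D"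
  unfolding winA_def winB_def using lstar_supp[of p "- D" "D - 1"] by force
lemma winA_mono: "winA p a \<Longrightarrow> a \<le> D \<Longrightarrow> winA p D"
  unfolding winA_def by force
lemma winB_mono: "winB p a \<Longrightarrow> a \<le> D \<Longrightarrow> winB p D"
  unfolding winB_def by force
lemma winB_ldeg: "winB p D \<Longrightarrow> ldegree p < ereal (of_int D)"
  unfolding winB_def by (rule ldeg_lt) auto

theorem lemma4p2:
  fixes k s :: nat and Q :: "lpoly mat"
  assumes "Q \<in> carrier_mat k k"
    and "hermite Q"
    and "Q $$ (0, 0) \<noteq> 0"
    and "\<forall>i j. i \<le> j \<and> j < k \<longrightarrow> llen (Q $$ (i, i)) \<le> llen (Q $$ (j, j))"
    and "s < k"
    and "\<forall>t<s. diag_dom_at k Q t"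
  shows "\<exists>U. unimodular k U \<and>
           (let Qt = U * Q * star_mat U in
              (\<forall>t\<le>s. diag_dom_at k Qt t) \<and>
              (\<forall>i\<le>s. \<forall>j\<le>s. Qt $$ (i, j) = Q $$ (i, j)))"
proof -
  define n where "n = Suc s"
  have nk: "n \<le> k" using assms(5) by (simp add: n_def)
  define D where "D t = Max (Poly_Mapping.keys (Q $$ (t, t)))" for t
  have Qc: "dim_row Q = k" "dim_col Q = k" using assms(1) by auto
  have herm: "Q $$ (i, j) = lstar (Q $$ (j, i))" if "i < k" "j < k" for i j
  proof -
    have "Q $$ (i, j) = star_mat Q $$ (i, j)" using assms(2) by (simp add: hermite_def)
    also have "\<dots> = lstar (Q $$ (j, i))" using that Qc by (simp add: star_mat_def)
    finally show ?thesis .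
  qed
  have nz: "Q $$ (t, t) \<noteq> 0" if "t < k" for t
  proof
    assume z: "Q $$ (t, t) = 0"
    have "llen (Q $$ (0, 0)) \<le> llen (Q $$ (t, t))" using assms(4) that by blast
    then show False using z assms(3) by (simp add: llen_def)
  qed
  have symt: "Min (Poly_Mapping.keys (Q $$ (t, t))) = - D t" if "t < k" for t
    using sym_Min[of "Q $$ (t, t)"] herm[OF that that] nz[OF that] by (simp add: D_def)
  have Dnn: "0 \<le> D t" if "t < k" for t
    using lookup_bounds[OF lookup_Max[OF nz[OF that]]] symt[OF that] by (simp add: D_def)
  have fsd: "fs (Q $$ (t, t)) = {- D t..D t}" if "t < k" for t
    using nz[OF that] symt[OF that] by (simp add: fs_def D_def)
  have ldd: "ldegree (Q $$ (t, t)) = ereal (of_int (D t))" if "t < k" for t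
    using nz[OF that] by (simp add: ldegree_def D_def)
  have llend: "llen (Q $$ (t, t)) = ereal (of_int (2 * D t))" if "t < k" for t
    using nz[OF that] symt[OF that] by (simp add: llen_def D_def[symmetric])
  have mono: "D t \<le> D j" if "t \<le> j" "j < k" for t j
  proof -
    have "llen (Q $$ (t, t)) \<le> llen (Q $$ (j, j))" using assms(4) that by blast
    then show ?thesis using llend[of t] llend[of j] that by simp
  qed
  have domfs1: "\<forall>e. Poly_Mapping.lookup (Q $$ (i, t)) e \<noteq> 0 \<longrightarrow> - D t \<le> e \<and> e \<le> D t"
    if "t < s" "i < k" "i \<noteq> t" for t i
  proof -
    have tk: "t < k" using that assms(5) by simp
    have "fs (Q $$ (i, t)) \<subset> fs (Q $$ (t, t))" using assms(6) that unfolding diag_dom_at_def by blast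
    then have "fs (Q $$ (i, t)) \<subseteq> {- D t..D t}" using fsd[OF tk] by auto
    then show ?thesis using fs_supp by blast
  qed
  have domfs2: "\<forall>e. Poly_Mapping.lookup (Q $$ (t, i)) e \<noteq> 0 \<longrightarrow> - D t \<le> e \<and> e \<le> D t"
    if "t < s" "i < k" "i \<noteq> t" for t i
  proof -
    have tk: "t < k" using that assms(5) by simp
    have "fs (Q $$ (t, i)) \<subset> fs (Q $$ (t, t))" using assms(6) that unfolding diag_dom_at_def by blast
    then have "fs (Q $$ (t, i)) \<subseteq> {- D t..D t}" using fsd[OF tk] by auto
    then show ?thesis using fs_supp by blast
  qed
  have domdeg: "\<forall>e. Poly_Mapping.lookup (Q $$ (t, i)) e \<noteq> 0 \<longrightarrow> e \<le> D t - 1"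
    if "t < s" "t < i" "i < k" for t i
  proof -
    have tk: "t < k" using that assms(5) by simp
    have "ldegree (Q $$ (t, i)) < ldegree (Q $$ (t, t))" using assms(6) that unfolding diag_dom_at_def by blast
    then have "ldegree (Q $$ (t, i)) < ereal (of_int (D t))" using ldd[OF tk] by simp
    then show ?thesis using ldeg_supp by blast
  qed
  have upB: "winB (Q $$ (t, j)) (D t)" if "t < j" "j < n" for t j
    using domfs2[of t j] domdeg[of t j] that nk unfolding winB_def n_def by auto
  have lowA: "winA (Q $$ (t, j)) (D j)" if "j < t" "t < n" for t j
  proof -
    have "winA (lstar (Q $$ (j, t))) (D j)" by (rule winB_lstar, rule upB) (use that in auto)
    then show ?thesis using herm[of t j] that nk by simp
  qed
  interpret red n "\<lambda>t j. Q $$ (t, j)" D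
  proof
    fix t assume "t < n"
    then have tk: "t < k" using nk by simp
    show "Poly_Mapping.lookup (Q $$ (t, t)) (D t) \<noteq> 0" using lookup_Max[OF nz[OF tk]] by (simp add: D_def)
    show "Poly_Mapping.lookup (Q $$ (t, t)) (- D t) \<noteq> 0" using lookup_Min[OF nz[OF tk]] symt[OF tk] by simp
    fix e assume "Poly_Mapping.lookup (Q $$ (t, t)) e \<noteq> 0"
    then show "- D t \<le> e \<and> e \<le> D t" using lookup_bounds[of "Q $$ (t, t)" e] symt[OF tk] by (simp add: D_def)
  next
    fix j t e assume "j < t" "t < n" "Poly_Mapping.lookup (Q $$ (t, j)) e \<noteq> 0"
    then show "- D j + 1 \<le> e \<and> e \<le> D j" using lowA[of j t] unfolding winA_def by blast
  next
    fix t j e assume "t < j" "j < n" "Poly_Mapping.lookup (Q $$ (t, j)) e \<noteq> 0"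
    then show "- D t \<le> e \<and> e \<le> D t - 1" using upB[of t j] unfolding winB_def by blast
  next
    fix t j assume "t \<le> j" "j < n" then show "D t \<le> D j" using mono nk by simp
  qed
  have "\<forall>i. \<exists>x. \<forall>j<n. \<forall>e. Poly_Mapping.lookup (comb (\<lambda>j. Q $$ (i, j)) x j) e \<noteq> 0 \<longrightarrow> - D j + 1 \<le> e \<and> e \<le> D j"
    using full_red by blast
  from choice[OF this] obtain X where X0: "\<forall>i. \<forall>j<n. \<forall>e. Poly_Mapping.lookup (comb (\<lambda>j. Q $$ (i, j)) (X i) j) e \<noteq> 0 \<longrightarrow> - D j + 1 \<le> e \<and> e \<le> D j"
    by blast
  have X: "\<forall>j<n. \<forall>e. Poly_Mapping.lookup (comb (\<lambda>j. Q $$ (i, j)) (X i) j) e \<noteq> 0 \<longrightarrow> - D j + 1 \<le> e \<and> e \<le> D j" for i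
    using X0 by blast
  define U where "U = mat k k (\<lambda>(i, j). if i < n then (if i = j then 1 else 0) else if j < n then X i j else if i = j then (1::lpoly) else 0)"
  have Uc: "U \<in> carrier_mat k k" "dim_row U = k" "dim_col U = k" by (auto simp: U_def)
  have Ulow: "U $$ (i, l) = (if i = l then 1 else 0)" if "i < n" "l < k" for i l
    using that nk by (simp add: U_def)
  have Uhigh: "U $$ (i, l) = (if l < n then X i l else 0) + (if l = i then 1 else 0)" if "n \<le> i" "i < k" "l < k" for i l
    using that by (auto simp: U_def)
  have uni: "unimodular k U"
  proof -
    have lt: "U $$ (i, j) = 0" if "i < j" "j < k" for i j
      using that by (simp add: U_def)
    have "det U = prod_list (diag_mat U)"
      by (rule det_lower_triangular[OF lt Uc(1)])
    also have "diag_mat U = map (\<lambda>_. 1) [0..<k]"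
      unfolding diag_mat_def Uc(2) by (rule map_cong) (simp_all add: U_def)
    also have "prod_list (map (\<lambda>_. 1::lpoly) [0..<k]) = 1" by (simp add: map_replicate_const)
    finally have "det U = Poly_Mapping.single 0 1" by simp
    then have "\<exists>c m. c \<noteq> 0 \<and> det U = Poly_Mapping.single m c" by (intro exI[of _ "1::complex"] exI[of _ "0::int"]) simp
    then show ?thesis unfolding unimodular_def using Uc(1) by simp
  qed
  define P where "P = U * Q"
  have Pc: "dim_row P = k" "dim_col P = k" using Uc Qc by (auto simp: P_def)
  have Psum: "P $$ (i, j) = (\<Sum>l = 0..<k. U $$ (i, l) * Q $$ (l, j))" if "i < k" "j < k" for i j
    using that Uc Qc by (simp add: P_def scalar_prod_def)
  have Plow: "P $$ (i, j) = Q $$ (i, j)" if "i < n" "j < k" for i j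
  proof -
    have "P $$ (i, j) = (\<Sum>l = 0..<k. (if i = l then 1 else 0) * Q $$ (l, j))"
      using that nk by (simp add: Psum Ulow)
    also have "\<dots> = (\<Sum>l = 0..<k. (if i = l then Q $$ (l, j) else 0))"
      by (rule sum.cong) auto
    also have "\<dots> = Q $$ (i, j)" using that nk by simp
    finally show ?thesis .
  qed
  have Phigh: "P $$ (i, j) = comb (\<lambda>j. Q $$ (i, j)) (X i) j" if "n \<le> i" "i < k" "j < k" for i j
  proof -
    have "P $$ (i, j) = (\<Sum>l = 0..<k. (if l < n then X i l * Q $$ (l, j) else 0) + (if l = i then Q $$ (l, j) else 0))"
      using that by (simp add: Psum Uhigh distrib_right) (rule sum.cong, auto)
    also have "\<dots> = (\<Sum>l = 0..<k. (if l < n then X i l * Q $$ (l, j) else 0)) + Q $$ (i, j)"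
      using that by (simp add: sum.distrib)
    also have "(\<Sum>l = 0..<k. (if l < n then X i l * Q $$ (l, j) else 0)) = (\<Sum>l<n. X i l * Q $$ (l, j))"
    proof -
      have "(\<Sum>l = 0..<k. (if l < n then X i l * Q $$ (l, j) else 0)) = (\<Sum>l \<in> {l \<in> {0..<k}. l < n}. X i l * Q $$ (l, j))"
        by (rule sum.inter_filter[symmetric]) simp
      also have "{l \<in> {0..<k}. l < n} = {..<n}" using nk by auto
      finally show ?thesis .
    qed
    finally show ?thesis by (simp add: comb_def add.commute)
  qed
  define Qt where "Qt = U * Q * star_mat U"
  have Sc: "dim_row (star_mat U) = k" "dim_col (star_mat U) = k" using Uc by (auto simp: star_mat_def)
  have Qtsum: "Qt $$ (i, j) = (\<Sum>l = 0..<k. P $$ (i, l) * lstar (U $$ (j, l)))" if "i < k" "j < k" for i j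
    using that Uc Sc Pc by (simp add: Qt_def P_def[symmetric] scalar_prod_def star_mat_def)
  have Qtlow: "Qt $$ (i, j) = P $$ (i, j)" if "i < k" "j < n" for i j
  proof -
    have "Qt $$ (i, j) = (\<Sum>l = 0..<k. P $$ (i, l) * (if j = l then 1 else 0))"
      using that nk by (simp add: Qtsum Ulow if_distrib[of lstar] cong: if_cong)
    also have "\<dots> = (\<Sum>l = 0..<k. (if j = l then P $$ (i, l) else 0))"
      by (rule sum.cong) auto
    also have "\<dots> = P $$ (i, j)" using that nk by simp
    finally show ?thesis .
  qed
  have Qthigh: "Qt $$ (i, j) = lstar (P $$ (j, i))" if "i < n" "n \<le> j" "j < k" for i j
  proof -
    have ik: "i < k" using that nk by simp
    have "lstar (P $$ (j, i)) = (\<Sum>l = 0..<k. lstar (U $$ (j, l)) * lstar (Q $$ (l, i)))"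
      using that ik by (simp add: Psum lstar_sum lstar_mult)
    also have "\<dots> = (\<Sum>l = 0..<k. P $$ (i, l) * lstar (U $$ (j, l)))"
      using that ik by (intro sum.cong) (auto simp: Plow herm[symmetric] mult.commute)
    also have "\<dots> = Qt $$ (i, j)" using that ik by (simp add: Qtsum)
    finally show ?thesis by simp
  qed
  have winrow: "winA (Qt $$ (i, t)) (D t)" if "n \<le> i" "i < k" "t < n" for i t
    using X[of i] that nk by (simp add: Qtlow Phigh winA_def)
  have dd: "diag_dom_at k Qt t" if "t < n" for t
  proof -
    have tk: "t < k" using that nk by simp
    have Qtt: "Qt $$ (t, t) = Q $$ (t, t)" using that tk by (simp add: Qtlow Plow)
    have c1: "fs (Qt $$ (i, t)) \<subset> fs (Qt $$ (t, t)) \<and> fs (Qt $$ (t, i)) \<subset> fs (Qt $$ (t, t))"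
      if "i < k" "i \<noteq> t" for i
    proof (cases "i < n")
      case True
      have e1: "Qt $$ (i, t) = Q $$ (i, t)" "Qt $$ (t, i) = Q $$ (t, i)"
        using True \<open>t < n\<close> that tk by (simp_all add: Qtlow Plow)
      show ?thesis
      proof (cases "i < t")
        case True
        have "winA (Q $$ (t, i)) (D t)" using lowA[OF True \<open>t < n\<close>] winA_mono mono[of i t] True tk by auto
        moreover have "winB (Q $$ (i, t)) (D t)" using upB[OF True \<open>t < n\<close>] winB_mono mono[of i t] True tk by auto
        ultimately show ?thesis using e1 Qtt fsd[OF tk] winA_fs winB_fs Dnn[OF tk] by auto
      next
        case False
        then have ti: "t < i" using that by simp
        have "winB (Q $$ (t, i)) (D t)" using upB[OF ti \<open>i < n\<close>] .
        moreover have "winA (Q $$ (i, t)) (D t)" using lowA[OF ti \<open>i < n\<close>] .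
        ultimately show ?thesis using e1 Qtt fsd[OF tk] winA_fs winB_fs Dnn[OF tk] by auto
      qed
    next
      case False
      then have A: "winA (Qt $$ (i, t)) (D t)" using winrow that \<open>t < n\<close> by simp
      have "Qt $$ (t, i) = lstar (Qt $$ (i, t))" using False that \<open>t < n\<close> tk by (simp add: Qthigh Qtlow)
      then have "winB (Qt $$ (t, i)) (D t)" using winA_lstar[OF A] by simp
      then show ?thesis using A Qtt fsd[OF tk] winA_fs winB_fs Dnn[OF tk] by auto
    qed
    have c2: "ldegree (Qt $$ (t, i)) < ldegree (Qt $$ (t, t))" if "i < k" "t < i" for i
    proof -
      have "winB (Qt $$ (t, i)) (D t)"
      proof (cases "i < n")
        case True
        then show ?thesis using upB[OF \<open>t < i\<close> True] \<open>t < n\<close> that by (simp add: Qtlow Plow)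
      next
        case False
        then have A: "winA (Qt $$ (i, t)) (D t)" using winrow that \<open>t < n\<close> by simp
        have "Qt $$ (t, i) = lstar (Qt $$ (i, t))" using False that \<open>t < n\<close> tk by (simp add: Qthigh Qtlow)
        then show ?thesis using winA_lstar[OF A] by simp
      qed
      then show ?thesis using winB_ldeg Qtt ldd[OF tk] by simp
    qed
    show ?thesis unfolding diag_dom_at_def using c1 c2 by blast
  qed
  show ?thesis
  proof (intro exI conjI)
    show "unimodular k U" by (rule uni)
    show "let Qt = U * Q * star_mat U in (\<forall>t\<le>s. diag_dom_at k Qt t) \<and> (\<forall>i\<le>s. \<forall>j\<le>s. Qt $$ (i, j) = Q $$ (i, j))"
      unfolding Let_def Qt_def[symmetric]
    proof (intro conjI allI impI)
      fix t assume "t \<le> s" then show "diag_dom_at k Qt t" using dd by (simp add: n_def)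
    next
      fix i j assume "i \<le> s" "j \<le> s"
      then show "Qt $$ (i, j) = Q $$ (i, j)" using nk by (simp add: n_def Qtlow Plow)
    qed
  qed
qed

end
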